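(* Let $(A_k)$ be a sequence in $S_n$ converging to $A\in S_n$. Then there is $k_0$ such that for all $k\ge k_0$ and all $i\in\{1,\dots,n\}$ there is a unique $\kappa(k,i)\in\{1,\dots,n\}$ with $\Lambda_{\kappa(k,i)}(A_k)=\Lambda_i(A)$ and, if $\kappa(k,i)\ne n$, $\Lambda_{\kappa(k,i)+1}(A_k)\neq\Lambda_i(A)$. Moreover, if $i'$ is minimal with $\mathrm{syst}_{i'}(A)=\mathrm{syst}_i(A)$, then $\lim_{k\to\infty}\mathrm{syst}_{j_k}(A_k)=\mathrm{syst}_i(A)$ for every choice of integers $j_k$ with $\kappa(k,i'-1)<j_k\le\kappa(k,i)$.
   Context: $S_n=\mathrm{SO}_n\backslash\mathrm{SL}_n\mathbb R$; a point is represented by $A\in\mathrm{SL}_n\mathbb R$ up to left $\mathrm{SO}_n$. For $i=1,\dots,n$, $\mathrm{syst}_i(A)=\inf\{r>0:\dim_{\mathbb R}\mathrm{Span}_{\mathbb R}\{v\in\mathbb Z^n:|Av|<r\}\ge i\}$, and $\Lambda_i(A)=\mathrm{Span}_{\mathbb R}\{v\in\mathbb Z^n:|Av|\le\mathrm{syst}_i(A)\}$; by convention $\Lambda_0(A)=0$ (and correspondingly $\kappa(k,0)=0$). Thus $0\subsetneq\Lambda_1(A)\subset\dots\subset\Lambda_n(A)=\mathbb R^n$ with $\dim\Lambda_i(A)\ge i$. *)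

theory Defs
  imports "HOL-Analysis.Analysis"
begin

text \<open>Points of S_n = SO_n \ SL_n(R) are represented by matrices in SL_n(R);
  the dimension n is CARD('n).\<close>

definition SL :: "(real^'n^'n) set" where
  "SL = {A. det A = 1}"

definition SO :: "(real^'n^'n) set" where
  "SO = {Q. orthogonal_matrix Q \<and> det Q = 1}"

definition intvecs :: "(real^'n) set" where
  "intvecs = {v. \<forall>i. v $ i \<in> \<int>}"

definition syst :: "nat \<Rightarrow> real^'n^'n \<Rightarrow> real" where
  "syst i A = Inf {r. r > 0 \<and> dim (span {v \<in> intvecs. norm (A *v v) < r}) \<ge> i}"

definition Lam :: "nat \<Rightarrow> real^'n^'n \<Rightarrow> (real^'n) set" where
  "Lam i A = (if i = 0 then {0} else span {v \<in> intvecs. norm (A *v v) \<le> syst i A})"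

text \<open>Convergence in the quotient S_n: some representatives converge.\<close>
definition converges_Sn :: "(nat \<Rightarrow> real^'n^'n) \<Rightarrow> real^'n^'n \<Rightarrow> bool" where
  "converges_Sn As A \<longleftrightarrow> (\<exists>Q. (\<forall>k. Q k \<in> SO) \<and> (\<lambda>k. Q k ** As k) \<longlonglongrightarrow> A)"

definition kappa :: "real^'n^'n \<Rightarrow> real^'n^'n \<Rightarrow> nat \<Rightarrow> nat" where
  "kappa B A i = (if i = 0 then 0 else
     (THE c. c \<in> {1..CARD('n)} \<and> Lam c B = Lam i A \<and>
             (c \<noteq> CARD('n) \<longrightarrow> Lam (c + 1) B \<noteq> Lam i A)))"

end

theory Submission
  imports Defs
begin


lemma mat_bound:
  fixes M :: "real^'n^'m"
  shows "norm (M *v x) \<le> (real CARD('m) * real CARD('n) * norm M) * norm x"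
proof -
  have bl: "bounded_linear ((*v) M)"
    by (simp add: linear_conv_bounded_linear)
  have c: "\<bar>M$i$j\<bar> \<le> norm M" for i j
  proof -
    have "\<bar>M$i$j\<bar> \<le> norm (M$i)" by (rule component_le_norm_cart)
    also have "norm (M$i) \<le> norm M" by (rule Finite_Cartesian_Product.norm_nth_le)
    finally show ?thesis .
  qed
  have "onorm ((*v) M) \<le> real CARD('m) * real CARD('n) * norm M"
    by (rule onorm_le_matrix_component) (rule c)
  moreover have "norm (M *v x) \<le> onorm ((*v) M) * norm x" using onorm[OF bl] .
  ultimately show ?thesis by (meson mult_right_mono norm_ge_zero order_trans)
qed

lemma inv_bound:
  fixes A :: "real^'n^'n"
  assumes "invertible A"
  shows "\<exists>K>0. \<forall>x. norm x \<le> K * norm (A *v x)"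
proof -
  obtain M where M: "M ** A = mat 1" using assms unfolding invertible_def by blast
  define K where "K = real CARD('n) * real CARD('n) * norm M + 1"
  have "0 \<le> real CARD('n) * real CARD('n) * norm M" by simp
  hence "K > 0" unfolding K_def by linarith
  moreover have "norm x \<le> K * norm (A *v x)" for x
  proof -
    have "x = M *v (A *v x)" by (simp add: matrix_vector_mul_assoc M)
    hence "norm x = norm (M *v (A *v x))" by simp
    also have "\<dots> \<le> (real CARD('n) * real CARD('n) * norm M) * norm (A *v x)"
      by (rule mat_bound)
    also have "\<dots> \<le> K * norm (A *v x)" unfolding K_def by (simp add: mult_right_mono)
    finally show ?thesis .
  qed
  ultimately show ?thesis by blast
qed

lemma finite_short:
  fixes B :: "real^'n^'n"
  assumes K: "\<forall>x. norm x \<le> K * norm (B *v x)" and "K > 0"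
  shows "finite {v \<in> intvecs. norm (B *v v) \<le> r}"
proof -
  define N where "N = \<lceil>K * r\<rceil>"
  have "{v \<in> intvecs. norm (B *v v) \<le> r} \<subseteq> (\<lambda>f. \<chi> i. real_of_int (f i)) ` (PiE UNIV (\<lambda>_. {-N..N}))"
  proof
    fix v assume v: "v \<in> {v \<in> intvecs. norm (B *v v) \<le> r}"
    have "K * norm (B *v v) \<le> K * r" using v \<open>K>0\<close> by (intro mult_left_mono) auto
    hence nv: "norm v \<le> K * r" using K by (meson order_trans)
    have vi: "v $ i \<in> \<int>" for i using v by (auto simp: intvecs_def)
    have fl: "real_of_int \<lfloor>v $ i\<rfloor> = v $ i" for i
    proof -
      obtain z where "v $ i = of_int z" using vi[of i] by (rule Ints_cases)
      thus ?thesis by simp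
    qed
    have "v = (\<chi> i. real_of_int ((\<lambda>i. \<lfloor>v $ i\<rfloor>) i))"
      by (simp add: vec_eq_iff fl)
    moreover have "(\<lambda>i. \<lfloor>v $ i\<rfloor>) \<in> PiE UNIV (\<lambda>_. {-N..N})"
    proof -
      have b: "\<bar>v $ i\<bar> \<le> K * r" for i using component_le_norm_cart[of v i] nv by linarith
      have "\<lfloor>v $ i\<rfloor> \<in> {-N..N}" for i
      proof -
        have "real_of_int \<lfloor>v $ i\<rfloor> \<le> real_of_int N"
          using of_int_floor_le[of "v $ i"] le_of_int_ceiling[of "K * r"] b[of i] unfolding N_def by linarith
        hence u: "\<lfloor>v $ i\<rfloor> \<le> N" by (simp only: of_int_le_iff)
        have "\<lfloor>- (K * r)\<rfloor> \<le> \<lfloor>v $ i\<rfloor>" using b[of i] by (intro floor_mono) linarith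
        hence "- N \<le> \<lfloor>v $ i\<rfloor>" unfolding N_def floor_minus .
        thus ?thesis using u by simp
      qed
      thus ?thesis by auto
    qed
    ultimately show "v \<in> (\<lambda>f. \<chi> i. real_of_int (f i)) ` (PiE UNIV (\<lambda>_. {-N..N}))" by (rule image_eqI)
  qed
  moreover have "finite (PiE (UNIV::'n set) (\<lambda>_. {-N..N}))" by (rule finite_PiE) auto
  ultimately show ?thesis using finite_subset by blast
qed



definition RR :: "nat \<Rightarrow> real^'n^'n \<Rightarrow> real set" where
  "RR c B = {r. r > 0 \<and> dim (span {v \<in> intvecs. norm (B *v v) < r}) \<ge> c}"

lemma syst_RR: "syst c B = Inf (RR c B)"
  by (simp add: syst_def RR_def)

lemma RR_bdd: "bdd_below (RR c B)"
  unfolding RR_def bdd_below_def by (rule exI[of _ 0]) auto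

lemma RR_up: "r \<in> RR c B \<Longrightarrow> r \<le> r' \<Longrightarrow> r' \<in> RR c B"
proof -
  assume r: "r \<in> RR c B" and "r \<le> r'"
  have "{v \<in> intvecs. norm (B *v v) < r} \<subseteq> {v \<in> intvecs. norm (B *v v) < r'}"
    using \<open>r \<le> r'\<close> by auto
  hence "dim (span {v \<in> intvecs. norm (B *v v) < r}) \<le> dim (span {v \<in> intvecs. norm (B *v v) < r'})"
    by (simp add: dim_subset)
  thus ?thesis using r \<open>r \<le> r'\<close> unfolding RR_def by auto
qed

lemma Basis_intvecs: "(Basis :: (real^'n) set) \<subseteq> intvecs"
  by (auto simp: intvecs_def Basis_vec_def axis_def)

lemma RR_ne:
  fixes B :: "real^'n^'n"
  assumes "c \<le> CARD('n)"
  shows "RR c B \<noteq> {}"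
proof -
  define r where "r = 1 + (\<Sum>b\<in>Basis. norm (B *v b))"
  have "0 \<le> (\<Sum>b\<in>(Basis::(real^'n) set). norm (B *v b))" by (simp add: sum_nonneg)
  hence r0: "r > 0" unfolding r_def by linarith
  have "(Basis :: (real^'n) set) \<subseteq> {v \<in> intvecs. norm (B *v v) < r}"
  proof
    fix b :: "real^'n" assume b: "b \<in> Basis"
    have "norm (B *v b) \<le> (\<Sum>b\<in>Basis. norm (B *v b))"
      using b by (intro member_le_sum) auto
    thus "b \<in> {v \<in> intvecs. norm (B *v v) < r}" using b Basis_intvecs unfolding r_def by auto
  qed
  hence "span (Basis :: (real^'n) set) \<subseteq> span {v \<in> intvecs. norm (B *v v) < r}"
    by (rule span_mono)
  hence "span {v \<in> intvecs. norm (B *v v) < r} = UNIV" by auto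
  hence "dim (span {v \<in> intvecs. norm (B *v v) < r}) = CARD('n)" by simp
  hence "r \<in> RR c B" using r0 assms by (simp add: RR_def)
  thus ?thesis by blast
qed

lemma syst_nonneg: "c \<le> CARD('n) \<Longrightarrow> 0 \<le> syst c (B::real^'n^'n)"
  unfolding syst_RR by (rule cInf_greatest[OF RR_ne]) (auto simp: RR_def)

lemma syst_mono:
  fixes B :: "real^'n^'n"
  assumes "a \<le> b" "b \<le> CARD('n)"
  shows "syst a B \<le> syst b B"
  unfolding syst_RR
  by (rule cInf_superset_mono) (use assms RR_ne RR_bdd in \<open>auto simp: RR_def\<close>)

lemma syst_compare:
  fixes A B :: "real^'n^'n"
  assumes "C > 0" "\<forall>v\<in>intvecs. norm (B *v v) \<le> C * norm (A *v v)" "i \<le> CARD('n)"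
  shows "syst i B \<le> C * syst i A"
proof -
  have h1: "syst i B \<le> C * r" if r: "r \<in> RR i A" for r
  proof -
    have "{v \<in> intvecs. norm (A *v v) < r} \<subseteq> {v \<in> intvecs. norm (B *v v) < C * r}"
    proof
      fix v assume "v \<in> {v \<in> intvecs. norm (A *v v) < r}"
      hence "v \<in> intvecs" "norm (A *v v) < r" by auto
      hence "C * norm (A *v v) < C * r" using assms(1) by simp
      thus "v \<in> {v \<in> intvecs. norm (B *v v) < C * r}" using assms(2) \<open>v \<in> intvecs\<close> by force
    qed
    hence "dim (span {v \<in> intvecs. norm (A *v v) < r}) \<le> dim (span {v \<in> intvecs. norm (B *v v) < C * r})"
      by (simp add: dim_subset)
    hence "C * r \<in> RR i B" using r assms(1) unfolding RR_def by auto
    thus ?thesis unfolding syst_RR by (rule cInf_lower[OF _ RR_bdd])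
  qed
  hence "syst i B / C \<le> r" if "r \<in> RR i A" for r
    using h1[OF that] assms(1) by (metis pos_divide_le_eq mult.commute)
  hence "syst i B / C \<le> syst i A" unfolding syst_RR[of i A]
    by (intro cInf_greatest RR_ne assms(3)) auto
  thus ?thesis using assms(1) by (metis pos_divide_le_eq mult.commute)
qed

lemma gap:
  fixes B :: "real^'n^'n"
  assumes "finite {v \<in> intvecs. norm (B *v v) \<le> s + 1}"
  shows "\<exists>r>s. \<forall>v\<in>intvecs. norm (B *v v) < r \<longrightarrow> norm (B *v v) \<le> s"
proof -
  define N where "N = (\<lambda>v. norm (B *v v)) ` {v \<in> {v \<in> intvecs. norm (B *v v) \<le> s + 1}. norm (B *v v) > s}"
  have fN: "finite N" unfolding N_def by (rule finite_imageI, rule finite_subset[OF _ assms]) auto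
  define r where "r = Min (insert (s+1) N)"
  have "r > s" unfolding r_def using fN by (auto simp: N_def)
  moreover have "norm (B *v v) \<le> s" if "v \<in> intvecs" "norm (B *v v) < r" for v
  proof (rule ccontr)
    assume "\<not> norm (B *v v) \<le> s"
    have "r \<le> s + 1" unfolding r_def using fN by simp
    hence "norm (B *v v) \<in> N" unfolding N_def using that \<open>\<not> norm (B *v v) \<le> s\<close> by auto
    hence "r \<le> norm (B *v v)" unfolding r_def using fN by simp
    thus False using that by simp
  qed
  ultimately show ?thesis by blast
qed

lemma dim_Lam:
  fixes B :: "real^'n^'n"
  assumes K: "\<forall>x. norm x \<le> K * norm (B *v x)" "K > 0" and c: "1 \<le> c" "c \<le> CARD('n)"
  shows "c \<le> dim (Lam c B)"
proof -
  define s where "s = syst c B"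
  obtain r where r: "r > s" "\<forall>v\<in>intvecs. norm (B *v v) < r \<longrightarrow> norm (B *v v) \<le> s"
    using gap[OF finite_short[OF K]] by blast
  have "Inf (RR c B) < r" using r s_def syst_RR by metis
  then obtain x where x: "x \<in> RR c B" "x < r"
    using cInf_less_iff[OF RR_ne[OF c(2)] RR_bdd] by blast
  have "r \<in> RR c B" using RR_up x by (meson less_imp_le)
  hence "c \<le> dim (span {v \<in> intvecs. norm (B *v v) < r})" unfolding RR_def by auto
  also have "\<dots> \<le> dim (span {v \<in> intvecs. norm (B *v v) \<le> s})"
    using r(2) by (intro dim_subset span_mono) auto
  finally show ?thesis using c unfolding Lam_def s_def by simp
qed

lemma syst_le_dimLam:
  fixes A :: "real^'n^'n"
  assumes "1 \<le> i" "i \<le> CARD('n)" "m \<le> dim (Lam i A)"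
  shows "syst m A \<le> syst i A"
proof (rule dense_ge)
  fix r assume r: "syst i A < r"
  have "r > 0" using r syst_nonneg[OF assms(2), of A] by linarith
  have "m \<le> dim (span {v \<in> intvecs. norm (A *v v) \<le> syst i A})"
    using assms unfolding Lam_def by simp
  also have "\<dots> \<le> dim (span {v \<in> intvecs. norm (A *v v) < r})"
    using r by (intro dim_subset span_mono) auto
  finally have "r \<in> RR m A" using \<open>r > 0\<close> unfolding RR_def by auto
  thus "syst m A \<le> r" unfolding syst_RR by (rule cInf_lower[OF _ RR_bdd])
qed

lemma Lam_mono:
  fixes B :: "real^'n^'n"
  assumes "1 \<le> a" "a \<le> b" "b \<le> CARD('n)"
  shows "Lam a B \<subseteq> Lam b B"
  using assms syst_mono[OF assms(2,3), of B] unfolding Lam_def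
  by (auto intro!: span_mono)

lemma kappa_unique:
  fixes B :: "real^'n^'n"
  assumes "c1 \<in> {1..CARD('n)}" "Lam c1 B = V" "c1 \<noteq> CARD('n) \<longrightarrow> Lam (c1 + 1) B \<noteq> V"
      "c2 \<in> {1..CARD('n)}" "Lam c2 B = V" "c2 \<noteq> CARD('n) \<longrightarrow> Lam (c2 + 1) B \<noteq> V"
  shows "c1 = c2"
proof -
  have *: False if "a \<in> {1..CARD('n)}" "Lam a B = V" "a \<noteq> CARD('n) \<longrightarrow> Lam (a + 1) B \<noteq> V"
      "b \<in> {1..CARD('n)}" "Lam b B = V" "a < b" for a b
  proof -
    have "Lam a B \<subseteq> Lam (a+1) B" using that by (intro Lam_mono) auto
    moreover have "Lam (a+1) B \<subseteq> Lam b B" using that by (intro Lam_mono) auto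
    ultimately show False using that by auto
  qed
  show ?thesis using *[of c1 c2] *[of c2 c1] assms by (metis linorder_neqE_nat)
qed



lemma orth_norm:
  fixes Q :: "real^'n^'n"
  assumes "orthogonal_matrix Q"
  shows "norm (Q *v y) = norm y"
proof -
  have "orthogonal_transformation ((*v) Q)"
    using assms by (simp add: orthogonal_transformation_matrix)
  thus ?thesis by (rule orthogonal_transformation_norm)
qed

lemma orth_inv:
  fixes Q M :: "real^'n^'n"
  assumes "orthogonal_matrix Q"
  shows "syst c (Q ** M) = syst c M" "Lam c (Q ** M) = Lam c M"
proof -
  have *: "norm ((Q ** M) *v v) = norm (M *v v)" for v
    by (simp add: matrix_vector_mul_assoc[symmetric] orth_norm[OF assms])
  show "syst c (Q ** M) = syst c M" unfolding syst_def * ..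
  thus "Lam c (Q ** M) = Lam c M" unfolding Lam_def * by simp
qed

lemma compare_seq:
  fixes A B :: "real^'n^'n"
  assumes KA: "\<forall>x. norm x \<le> KA * norm (A *v x)" "KA > 0"
  defines "d \<equiv> KA * (real CARD('n) * real CARD('n) * norm (B - A))"
  shows "norm (B *v v) \<le> (1 + d) * norm (A *v v)" "(1 - d) * norm (A *v v) \<le> norm (B *v v)"
proof -
  define m where "m = real CARD('n) * real CARD('n) * norm (B - A)"
  have m0: "0 \<le> m" unfolding m_def by simp
  have "norm ((B - A) *v v) \<le> m * norm v" unfolding m_def by (rule mat_bound)
  also have "\<dots> \<le> m * (KA * norm (A *v v))" using KA m0 by (intro mult_left_mono) auto
  also have "\<dots> = d * norm (A *v v)" unfolding d_def m_def by (simp only: mult_ac)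
  finally have e: "norm ((B - A) *v v) \<le> d * norm (A *v v)" .
  have eq: "B *v v = A *v v + (B - A) *v v" by (simp add: matrix_vector_mult_diff_rdistrib)
  have "norm (B *v v) \<le> norm (A *v v) + norm ((B - A) *v v)"
    by (subst eq) (rule norm_triangle_ineq)
  also have "\<dots> \<le> norm (A *v v) + d * norm (A *v v)" using e by linarith
  also have "\<dots> = (1 + d) * norm (A *v v)" by (simp only: distrib_right mult_1)
  finally show "norm (B *v v) \<le> (1 + d) * norm (A *v v)" .
  have eq2: "A *v v = B *v v - (B - A) *v v" using eq by simp
  have "norm (A *v v) \<le> norm (B *v v) + norm ((B - A) *v v)"
    by (subst eq2) (rule norm_triangle_ineq4)
  hence "norm (A *v v) \<le> norm (B *v v) + d * norm (A *v v)" using e by linarith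
  moreover have "(1 - d) * norm (A *v v) = norm (A *v v) - d * norm (A *v v)" by (simp only: left_diff_distrib mult_1)
  ultimately show "(1 - d) * norm (A *v v) \<le> norm (B *v v)" by linarith
qed



lemma subspace_Lam: "subspace (Lam c B)"
  unfolding Lam_def by simp

theorem mainTheorem10:
  fixes As :: "nat \<Rightarrow> real^'n^'n" and A :: "real^'n^'n"
  assumes "\<forall>k. As k \<in> SL" and "A \<in> SL"
    and "converges_Sn As A"
  shows "\<exists>k0.
     (\<forall>k\<ge>k0. \<forall>i\<in>{1..CARD('n)}. \<exists>!c. c \<in> {1..CARD('n)} \<and> Lam c (As k) = Lam i A \<and>
          (c \<noteq> CARD('n) \<longrightarrow> Lam (c + 1) (As k) \<noteq> Lam i A)) \<and>
     (\<forall>i\<in>{1..CARD('n)}. \<forall>i'. i' \<in> {1..CARD('n)} \<and> syst i' A = syst i A \<and>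
          (\<forall>m\<in>{1..CARD('n)}. syst m A = syst i A \<longrightarrow> i' \<le> m) \<longrightarrow>
        (\<forall>j :: nat \<Rightarrow> nat. (\<forall>k\<ge>k0. kappa (As k) A (i' - 1) < j k \<and> j k \<le> kappa (As k) A i) \<longrightarrow>
           (\<lambda>k. syst (j k) (As k)) \<longlonglongrightarrow> syst i A))"
proof -
  define n where "n = CARD('n)"
  obtain Q where Q: "\<forall>k. Q k \<in> SO" and QA: "(\<lambda>k. Q k ** As k) \<longlonglongrightarrow> A"
    using assms(3) unfolding converges_Sn_def by blast
  define B where "B k = Q k ** As k" for k
  have orthQ: "orthogonal_matrix (Q k)" for k using Q by (simp add: SO_def)
  have systB: "syst c (As k) = syst c (B k)" for c k unfolding B_def using orth_inv[OF orthQ] by simp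
  have LamB: "Lam c (As k) = Lam c (B k)" for c k unfolding B_def using orth_inv[OF orthQ] by simp
  have kapB: "kappa (As k) A i = kappa (B k) A i" for k i unfolding kappa_def LamB ..
  have invB: "invertible (B k)" for k
  proof -
    have "det (B k) = 1" using Q assms(1) by (simp add: B_def det_mul SO_def SL_def)
    thus ?thesis by (simp add: invertible_det_nz)
  qed
  have "invertible A" using assms(2) by (simp add: SL_def invertible_det_nz)
  then obtain KA where KA: "KA > 0" "\<forall>x. norm x \<le> KA * norm (A *v x)" using inv_bound by blast
  define \<delta> where "\<delta> k = KA * (real CARD('n) * real CARD('n) * norm (B k - A))" for k
  have up: "norm (B k *v v) \<le> (1 + \<delta> k) * norm (A *v v)" for k v
    using compare_seq(1)[OF KA(2,1)] unfolding \<delta>_def by blast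
  have lo: "(1 - \<delta> k) * norm (A *v v) \<le> norm (B k *v v)" for k v
    using compare_seq(2)[OF KA(2,1)] unfolding \<delta>_def by blast
  have \<delta>0: "\<delta> \<longlonglongrightarrow> 0"
  proof -
    have "(\<lambda>k. B k - A) \<longlonglongrightarrow> 0" using QA unfolding B_def by (simp add: LIM_zero)
    hence "(\<lambda>k. norm (B k - A)) \<longlonglongrightarrow> 0" by (simp add: tendsto_norm_zero)
    hence "(\<lambda>k. KA * (real CARD('n) * real CARD('n) * norm (B k - A))) \<longlonglongrightarrow> KA * (real CARD('n) * real CARD('n) * 0)"
      by (intro tendsto_intros)
    thus ?thesis unfolding \<delta>_def by simp
  qed
  have \<delta>nn: "\<delta> k \<ge> 0" for k using KA unfolding \<delta>_def by simp
  have systup: "syst c (B k) \<le> (1 + \<delta> k) * syst c A" if "c \<le> n" for c k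
    by (rule syst_compare) (use that \<delta>nn[of k] up in \<open>auto simp: n_def add_pos_nonneg\<close>)
  have systlo: "(1 - \<delta> k) * syst c A \<le> syst c (B k)" if "c \<le> n" "\<delta> k < 1" for c k
  proof -
    have pos: "0 < 1 - \<delta> k" using that by simp
    have "norm (A *v v) \<le> (1 / (1 - \<delta> k)) * norm (B k *v v)" for v
    proof -
      have "norm (A *v v) = (1 / (1 - \<delta> k)) * ((1 - \<delta> k) * norm (A *v v))" using pos by simp
      also have "\<dots> \<le> (1 / (1 - \<delta> k)) * norm (B k *v v)"
        by (rule mult_left_mono[OF lo]) (use pos in simp)
      finally show ?thesis .
    qed
    hence "syst c A \<le> (1 / (1 - \<delta> k)) * syst c (B k)"
      by (intro syst_compare) (use that pos in \<open>auto simp: n_def\<close>)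
    hence "(1 - \<delta> k) * syst c A \<le> (1 - \<delta> k) * ((1 / (1 - \<delta> k)) * syst c (B k))"
      using pos by (intro mult_left_mono) auto
    also have "\<dots> = syst c (B k)" using pos by simp
    finally show ?thesis .
  qed
  have "\<forall>i\<in>{1..n}. \<exists>r>syst i A. \<forall>v\<in>intvecs. norm (A *v v) < r \<longrightarrow> norm (A *v v) \<le> syst i A"
    using gap[OF finite_short[OF KA(2,1)]] by blast
  from bchoice[OF this] obtain R where R: "\<forall>i\<in>{1..n}. R i > syst i A \<and> (\<forall>v\<in>intvecs. norm (A *v v) < R i \<longrightarrow> norm (A *v v) \<le> syst i A)"
    by blast
  have "\<forall>i\<in>{1..n}. eventually (\<lambda>k. \<delta> k < 1 \<and> (1 + \<delta> k) * syst i A < (1 - \<delta> k) * R i) sequentially"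
  proof
    fix i assume i: "i \<in> {1..n}"
    have "(\<lambda>k. (1 - \<delta> k) * R i - (1 + \<delta> k) * syst i A) \<longlonglongrightarrow> (1 - 0) * R i - (1 + 0) * syst i A"
      by (intro tendsto_intros \<delta>0)
    moreover have "(1 - 0) * R i - (1 + 0) * syst i A > 0" using R i by simp
    ultimately have e1: "eventually (\<lambda>k. (1 - \<delta> k) * R i - (1 + \<delta> k) * syst i A > 0) sequentially"
      by (rule order_tendstoD(1))
    have e2: "eventually (\<lambda>k. \<delta> k < 1) sequentially" using order_tendstoD(2)[OF \<delta>0, of 1] by simp
    show "eventually (\<lambda>k. \<delta> k < 1 \<and> (1 + \<delta> k) * syst i A < (1 - \<delta> k) * R i) sequentially"
      using e1 e2 by eventually_elim auto
  qed
  from eventually_ball_finite[OF finite_atLeastAtMost this]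
  obtain k0 where k0: "\<forall>k\<ge>k0. \<forall>i\<in>{1..n}. \<delta> k < 1 \<and> (1 + \<delta> k) * syst i A < (1 - \<delta> k) * R i"
    unfolding eventually_sequentially by blast
  define d where "d i = dim (Lam i A)" for i
  have d_rng: "i \<le> d i" "d i \<le> n" if "i \<in> {1..n}" for i
    using dim_Lam[OF KA(2,1), of i] that dim_subset_UNIV_cart[of "Lam i A"] unfolding d_def n_def by auto
  have key: "Lam (d i) (B k) = Lam i A \<and> (d i \<noteq> n \<longrightarrow> Lam (d i + 1) (B k) \<noteq> Lam i A)"
    if "k \<ge> k0" "i \<in> {1..n}" for k i
  proof -
    have i: "1 \<le> i" "i \<le> n" using that by auto
    have dr: "i \<le> d i" "d i \<le> n" using d_rng that(2) by auto
    from k0 that have kd: "\<delta> k < 1" "(1 + \<delta> k) * syst i A < (1 - \<delta> k) * R i" by auto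
    obtain KB where KB: "KB > 0" "\<forall>x. norm x \<le> KB * norm (B k *v x)" using inv_bound[OF invB] by blast
    have sub: "Lam (d i) (B k) \<subseteq> Lam i A"
    proof -
      have "{v \<in> intvecs. norm (B k *v v) \<le> syst (d i) (B k)} \<subseteq> {v \<in> intvecs. norm (A *v v) \<le> syst i A}"
      proof safe
        fix v assume v: "v \<in> intvecs" "norm (B k *v v) \<le> syst (d i) (B k)"
        have "syst (d i) (B k) \<le> (1 + \<delta> k) * syst (d i) A" using systup dr by simp
        also have "\<dots> \<le> (1 + \<delta> k) * syst i A"
          using syst_le_dimLam[where A=A and i=i and m="d i"] i \<delta>nn[of k] unfolding d_def n_def
          by (intro mult_left_mono) auto
        also have "\<dots> < (1 - \<delta> k) * R i" by (rule kd(2))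
        finally have "(1 - \<delta> k) * norm (A *v v) < (1 - \<delta> k) * R i" using lo[of k v] v by linarith
        hence "norm (A *v v) < R i" using kd(1) by simp
        thus "norm (A *v v) \<le> syst i A" using R that(2) v(1) by auto
      qed
      thus ?thesis using i dr unfolding Lam_def by (auto intro: span_mono[THEN subsetD])
    qed
    have "dim (Lam i A) \<le> dim (Lam (d i) (B k))"
      using dim_Lam[OF KB(2,1), of "d i"] dr i unfolding d_def n_def by auto
    hence eq: "Lam (d i) (B k) = Lam i A"
      using subspace_dim_equal[OF subspace_Lam subspace_Lam sub] by simp
    moreover have "Lam (d i + 1) (B k) \<noteq> Lam i A" if "d i \<noteq> n"
    proof
      assume "Lam (d i + 1) (B k) = Lam i A"
      moreover have "d i + 1 \<le> dim (Lam (d i + 1) (B k))"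
        using dim_Lam[OF KB(2,1), of "d i + 1"] dr that unfolding n_def by auto
      ultimately show False unfolding d_def by simp
    qed
    ultimately show ?thesis by blast
  qed
  have ex: "d i \<in> {1..n} \<and> Lam (d i) (B k) = Lam i A \<and> (d i \<noteq> n \<longrightarrow> Lam (d i + 1) (B k) \<noteq> Lam i A)"
    if "k \<ge> k0" "i \<in> {1..n}" for k i
    using key[OF that] d_rng[OF that(2)] that(2) by auto
  have uniq: "c = d i" if "k \<ge> k0" "i \<in> {1..n}" "c \<in> {1..n}" "Lam c (B k) = Lam i A"
      "c \<noteq> n \<longrightarrow> Lam (c+1) (B k) \<noteq> Lam i A" for k i c
  proof -
    have e: "d i \<in> {1..n}" "Lam (d i) (B k) = Lam i A" "d i \<noteq> n \<longrightarrow> Lam (d i + 1) (B k) \<noteq> Lam i A"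
      using ex[OF that(1,2)] by auto
    have a1: "c \<in> {1..CARD('n)}" "c \<noteq> CARD('n) \<longrightarrow> Lam (c+1) (B k) \<noteq> Lam i A"
      using that(3,5) by (simp_all add: n_def)
    have a2: "d i \<in> {1..CARD('n)}" "d i \<noteq> CARD('n) \<longrightarrow> Lam (d i + 1) (B k) \<noteq> Lam i A"
      using e(1,3) by (simp_all add: n_def)
    show ?thesis by (rule kappa_unique[OF a1(1) that(4) a1(2) a2(1) e(2) a2(2)])
  qed
  have kap: "kappa (B k) A i = d i" if "k \<ge> k0" "i \<in> {1..n}" for k i
  proof -
    have "(THE c. c \<in> {1..CARD('n)} \<and> Lam c (B k) = Lam i A \<and> (c \<noteq> CARD('n) \<longrightarrow> Lam (c + 1) (B k) \<noteq> Lam i A)) = d i"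
      apply (rule the_equality)
      using ex[OF that] unfolding n_def apply simp
      using uniq[OF that] unfolding n_def by blast
    thus ?thesis using that(2) unfolding kappa_def by auto
  qed
  show ?thesis
  proof (rule exI[of _ k0], rule conjI)
    show "\<forall>k\<ge>k0. \<forall>i\<in>{1..CARD('n)}. \<exists>!c. c \<in> {1..CARD('n)} \<and> Lam c (As k) = Lam i A \<and>
          (c \<noteq> CARD('n) \<longrightarrow> Lam (c + 1) (As k) \<noteq> Lam i A)"
    proof (intro allI impI ballI)
      fix k i assume k: "k0 \<le> k" and i: "i \<in> {1..CARD('n)}"
      show "\<exists>!c. c \<in> {1..CARD('n)} \<and> Lam c (As k) = Lam i A \<and>
          (c \<noteq> CARD('n) \<longrightarrow> Lam (c + 1) (As k) \<noteq> Lam i A)"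
        unfolding LamB
        apply (rule ex1I[of _ "d i"])
        using ex[OF k] i unfolding n_def apply simp
        using uniq[OF k] i unfolding n_def by blast
    qed
    show "\<forall>i\<in>{1..CARD('n)}. \<forall>i'. i' \<in> {1..CARD('n)} \<and> syst i' A = syst i A \<and>
          (\<forall>m\<in>{1..CARD('n)}. syst m A = syst i A \<longrightarrow> i' \<le> m) \<longrightarrow>
        (\<forall>j :: nat \<Rightarrow> nat. (\<forall>k\<ge>k0. kappa (As k) A (i' - 1) < j k \<and> j k \<le> kappa (As k) A i) \<longrightarrow>
           (\<lambda>k. syst (j k) (As k)) \<longlonglongrightarrow> syst i A)"
    proof (intro allI impI ballI)
      fix i i' and j :: "nat \<Rightarrow> nat"
      assume i: "i \<in> {1..CARD('n)}"
        and i': "i' \<in> {1..CARD('n)} \<and> syst i' A = syst i A \<and> (\<forall>m\<in>{1..CARD('n)}. syst m A = syst i A \<longrightarrow> i' \<le> m)"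
        and j: "\<forall>k\<ge>k0. kappa (As k) A (i' - 1) < j k \<and> j k \<le> kappa (As k) A i"
      have i'n: "1 \<le> i'" "i' \<le> n" using i' by (auto simp: n_def)
      have kl: "kappa (B k) A (i' - 1) = i' - 1" if "k \<ge> k0" for k
      proof (cases "i' = 1")
        case True thus ?thesis by (simp add: kappa_def)
      next
        case False
        hence i1: "i' - 1 \<in> {1..n}" using i'n by auto
        have "d (i'-1) = i' - 1"
        proof (rule ccontr)
          assume "d (i'-1) \<noteq> i'-1"
          hence ge: "i' \<le> d (i'-1)" using d_rng[OF i1] by auto
          have "syst i' A \<le> syst (d (i'-1)) A" using syst_mono[OF ge, where B=A] d_rng[OF i1] by (simp add: n_def)
          also have "\<dots> \<le> syst (i'-1) A" using syst_le_dimLam[where A=A and i="i'-1" and m="d (i'-1)"] i1 unfolding d_def n_def by auto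
          finally have a: "syst i' A \<le> syst (i'-1) A" .
          have b: "syst (i'-1) A \<le> syst i' A" using syst_mono[where a="i'-1" and b=i' and B=A] i'n by (auto simp: n_def)
          have "syst (i'-1) A = syst i A" using a b i' by auto
          hence "i' \<le> i' - 1" using i' i1 by (auto simp: n_def)
          thus False using i'n by simp
        qed
        thus ?thesis using kap[OF that i1] by simp
      qed
      have jr: "i' \<le> j k \<and> j k \<le> d i" if "k \<ge> k0" for k
      proof -
        have "kappa (As k) A (i' - 1) < j k" "j k \<le> kappa (As k) A i" using j that by auto
        moreover have "kappa (As k) A (i' - 1) = i' - 1" using kl[OF that] kapB[of k] by simp
        moreover have "kappa (As k) A i = d i" using kap[OF that, of i] i kapB[of k] by (simp add: n_def)
        ultimately show ?thesis by linarith
      qed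
      have sj: "syst (j k) A = syst i A" if "k \<ge> k0" for k
      proof -
        have din: "d i \<le> n" using d_rng[of i] i by (auto simp: n_def)
        have "syst i' A \<le> syst (j k) A" using syst_mono[where a=i' and b="j k" and B=A] jr[OF that] din by (auto simp: n_def)
        moreover have "syst (j k) A \<le> syst (d i) A" using syst_mono[where a="j k" and b="d i" and B=A] jr[OF that] din by (auto simp: n_def)
        moreover have "syst (d i) A \<le> syst i A" using syst_le_dimLam[where A=A and i=i and m="d i"] i unfolding d_def n_def by auto
        ultimately show ?thesis using i' by auto
      qed
      have jn: "j k \<le> n" if "k \<ge> k0" for k using jr[OF that] d_rng[of i] i by (auto simp: n_def)
      show "(\<lambda>k. syst (j k) (As k)) \<longlonglongrightarrow> syst i A"
      proof (rule real_tendsto_sandwich)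
        show "eventually (\<lambda>k. (1 - \<delta> k) * syst i A \<le> syst (j k) (As k)) sequentially"
          unfolding eventually_sequentially
        proof (intro exI[of _ k0] allI impI)
          fix k assume k: "k0 \<le> k"
          have "\<delta> k < 1" using k0 k i by (auto simp: n_def)
          thus "(1 - \<delta> k) * syst i A \<le> syst (j k) (As k)"
            using systlo[OF jn[OF k], of k] sj[OF k] systB by simp
        qed
        show "eventually (\<lambda>k. syst (j k) (As k) \<le> (1 + \<delta> k) * syst i A) sequentially"
          unfolding eventually_sequentially
        proof (intro exI[of _ k0] allI impI)
          fix k assume k: "k0 \<le> k"
          show "syst (j k) (As k) \<le> (1 + \<delta> k) * syst i A"
            using systup[OF jn[OF k], of k] sj[OF k] systB by simp
        qed
        have "(\<lambda>k. (1 - \<delta> k) * syst i A) \<longlonglongrightarrow> (1 - 0) * syst i A" by (intro tendsto_intros \<delta>0)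
        thus "(\<lambda>k. (1 - \<delta> k) * syst i A) \<longlonglongrightarrow> syst i A" by simp
        have "(\<lambda>k. (1 + \<delta> k) * syst i A) \<longlonglongrightarrow> (1 + 0) * syst i A" by (intro tendsto_intros \<delta>0)
        thus "(\<lambda>k. (1 + \<delta> k) * syst i A) \<longlonglongrightarrow> syst i A" by simp
      qed
    qed
  qed
qed


end
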